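(* Consider Method 3.2 (described in the context) and suppose it does not terminate. Then for every limit point $(\bar x,\bar\sigma)$ of the sequence $\{(x_k,\sigma_k)\}_{k\in K}$ one has $\bar x\in X^*$ and $\bar\sigma=f^*$.
   Context: Setting: $f$ convex on $\mathbb{R}^n$; $D\subset\mathbb{R}^n$ convex closed with nonempty interior; $f$ attains its minimum $f^*$ on $D$; $X^*=\{x\in D:f(x)=f^*\}$, $x^*\in X^*$ fixed; $K=\{0,1,\dots\}$; $\operatorname{epi}(f,\mathbb{R}^n)=\{(x,\gamma):\gamma\ge f(x)\}$; for a set $Q$ (in $\mathbb{R}^n$ or $\mathbb{R}^{n+1}$), $W^1(u,Q)=\{a:\|a\|=1,\ \langle a,v-u\rangle\le0\ \forall v\in Q\}$. Method 3.2: choose $v'\in\operatorname{int}D$, $v''\in\operatorname{int}\operatorname{epi}(f,\mathbb{R}^n)$, a closed convex bounded $M_0\subset\mathbb{R}^n$ with $x^*\in M_0$, a closed convex $G_0\subset\mathbb{R}^{n+1}$ with $\operatorname{epi}(f,\mathbb{R}^n)\subset G_0$, a number $\bar\gamma\le\min\{f(x):x\in M_0\}$, and numbers $\varepsilon_k>0$, $k\in K$, with $\varepsilon_k\to0$; $i=k=0$. Step 1: $u_i=(y_i,\gamma_i)$ solves $\min\{\gamma:(x,\gamma)\in G_i,\ x\in M_k,\ \gamma\ge\bar\gamma\}$. Step 2: let $\bar u_i$ be the intersection point of the segment $[v'',u_i]$ with the boundary of $\operatorname{epi}(f,\mathbb{R}^n)$; if $\bar u_i=u_i$ and $y_i\in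 D$, stop. Step 3: if $\|\bar u_i-u_i\|>\varepsilon_k$, set $G_{i+1}=G_i\cap\{u:\langle b_i,u-\bar u_i\rangle\le0\}$ with $b_i\in W^1(\bar u_i,\operatorname{epi}(f,\mathbb{R}^n))$, $i\leftarrow i+1$, go to Step 1. Step 4: otherwise set $i_k=i$, $x_k=y_{i_k}$, $\sigma_k=\gamma_{i_k}$, and $G_{i+1}=S_i\cap\{u:\langle b_i,u-\bar u_i\rangle\le0\}$ with $b_i$ as in Step 3 and $S_i$ any closed convex set with $\operatorname{epi}(f,\mathbb{R}^n)\subset S_i$. Step 5: if $x_k\in D$ set $M_{k+1}=M_k$; otherwise let $\bar x_k$ be the intersection point of $[v',x_k]$ with the boundary of $D$ and set $M_{k+1}=M_k\cap\{x:\langle a_k,x-\bar x_k\rangle\le0\}$ with $a_k\in W^1(\bar x_k,D)$. Step 6: $i\leftarrow i+1$, $k\leftarrow k+1$; go to Step 1. *)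

theory Defs
  imports "HOL-Analysis.Analysis"
begin

definition W1 :: "'a::real_inner \<Rightarrow> 'a set \<Rightarrow> 'a set" where
  "W1 u Q = {a. norm a = 1 \<and> (\<forall>v\<in>Q. inner a (v - u) \<le> 0)}"

definition epi :: "('a \<Rightarrow> real) \<Rightarrow> ('a \<times> real) set" where
  "epi f = epigraph UNIV f"

end

theory Submission
  imports Defs
begin

theorem theorem3p2p2:
  fixes f :: "'a::euclidean_space \<Rightarrow> real"
    and D M0 :: "'a set"
    and G0 :: "('a \<times> real) set"
    and xstar v' :: 'a
    and v'' :: "'a \<times> real"
    and gbar :: real
    and eps :: "nat \<Rightarrow> real"
    and u ubar b :: "nat \<Rightarrow> 'a \<times> real"
    and G S :: "nat \<Rightarrow> ('a \<times> real) set"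
    and M :: "nat \<Rightarrow> 'a set"
    and xbar a :: "nat \<Rightarrow> 'a"
    and kidx ik :: "nat \<Rightarrow> nat"
  assumes f_convex: "convex_on UNIV f"
    and D_convex: "convex D" and D_closed: "closed D" and D_int: "interior D \<noteq> {}"
    and xstar_D: "xstar \<in> D" and xstar_min: "\<forall>x\<in>D. f xstar \<le> f x"
    and v'_int: "v' \<in> interior D"
    and v''_int: "v'' \<in> interior (epi f)"
    and M0: "closed M0" "convex M0" "bounded M0" "xstar \<in> M0"
    and G0: "closed G0" "convex G0" "epi f \<subseteq> G0"
    and gbar: "\<forall>x\<in>M0. gbar \<le> f x"
    and eps_pos: "\<forall>k. eps k > 0" and eps_lim: "eps \<longlonglongrightarrow> 0"
    \<comment> \<open>initialisation: i = k = 0\<close>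
    and G_0: "G 0 = G0" and M_0: "M 0 = M0" and kidx_0: "kidx 0 = 0"
    \<comment> \<open>Step 1: u_i = (y_i, gamma_i) solves min gamma over G_i, x in M_k, gamma >= gbar\<close>
    and step1: "\<forall>i. u i \<in> G i \<and> fst (u i) \<in> M (kidx i) \<and> snd (u i) \<ge> gbar \<and>
                 (\<forall>x g. (x, g) \<in> G i \<longrightarrow> x \<in> M (kidx i) \<longrightarrow> g \<ge> gbar \<longrightarrow> snd (u i) \<le> g)"
    \<comment> \<open>Step 2: ubar_i is the intersection of [v'', u_i] with the boundary of epi f;
        the method never stops (does not terminate)\<close>
    and step2: "\<forall>i. ubar i \<in> closed_segment v'' (u i) \<and> ubar i \<in> frontier (epi f)"
    and nonterm: "\<forall>i. \<not> (ubar i = u i \<and> fst (u i) \<in> D)"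
    \<comment> \<open>cutting planes b_i used in Steps 3 and 4\<close>
    and b_W1: "\<forall>i. b i \<in> W1 (ubar i) (epi f)"
    \<comment> \<open>Step 3\<close>
    and step3: "\<forall>i. norm (ubar i - u i) > eps (kidx i) \<longrightarrow>
                 G (Suc i) = G i \<inter> {w. inner (b i) (w - ubar i) \<le> 0} \<and> kidx (Suc i) = kidx i"
    \<comment> \<open>Step 4 (together with Step 6)\<close>
    and step4: "\<forall>i. \<not> norm (ubar i - u i) > eps (kidx i) \<longrightarrow>
                 closed (S i) \<and> convex (S i) \<and> epi f \<subseteq> S i \<and>
                 G (Suc i) = S i \<inter> {w. inner (b i) (w - ubar i) \<le> 0} \<and> kidx (Suc i) = Suc (kidx i)"
    \<comment> \<open>i_k: the iteration at which Step 4 is executed for the k-th time,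
        so that x_k = fst (u (ik k)), sigma_k = snd (u (ik k))\<close>
    and ik: "\<forall>k. kidx (ik k) = k \<and> \<not> norm (ubar (ik k) - u (ik k)) > eps k"
    \<comment> \<open>Step 5\<close>
    and step5_in: "\<forall>k. fst (u (ik k)) \<in> D \<longrightarrow> M (Suc k) = M k"
    and step5_out: "\<forall>k. fst (u (ik k)) \<notin> D \<longrightarrow>
                 xbar k \<in> closed_segment v' (fst (u (ik k))) \<and> xbar k \<in> frontier D \<and>
                 a k \<in> W1 (xbar k) D \<and>
                 M (Suc k) = M k \<inter> {x. inner (a k) (x - xbar k) \<le> 0}"
  shows "\<forall>xl sl. (\<exists>r. strict_mono r \<and> (\<lambda>j. u (ik (r j))) \<longlonglongrightarrow> (xl, sl)) \<longrightarrow>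
           xl \<in> {x \<in> D. f x = f xstar} \<and> sl = f xstar"
proof (intro allI impI)
  fix xl sl
  assume "\<exists>r. strict_mono r \<and> (\<lambda>j. u (ik (r j))) \<longlonglongrightarrow> (xl, sl)"
  then obtain r where r: "strict_mono r" and lim: "(\<lambda>j. u (ik (r j))) \<longlonglongrightarrow> (xl, sl)" by blast
  define x where "x k = fst (u (ik k))" for k
  have cont: "continuous_on UNIV f" using convex_on_continuous[OF open_UNIV f_convex] .
  have epi_eq: "epi f = {p. f (fst p) \<le> snd p}" unfolding epi_def epigraph_def by auto
  have contf: "continuous_on UNIV (\<lambda>p::'a\<times>real. f (fst p))"
    by (rule continuous_on_compose2[OF cont continuous_on_fst[OF continuous_on_id]]) auto
  have epi_closed: "closed (epi f)" unfolding epi_eq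
    by (rule closed_Collect_le[OF contf continuous_on_snd[OF continuous_on_id]])
  have epiG: "epi f \<subseteq> G i" for i
  proof (induction i)
    case 0 show ?case using G0 G_0 by simp
  next
    case (Suc i)
    have hs: "epi f \<subseteq> {w. inner (b i) (w - ubar i) \<le> 0}" using b_W1 unfolding W1_def by auto
    show ?case using step3 step4 Suc hs by (cases "norm (ubar i - u i) > eps (kidx i)") auto
  qed
  have Mdec: "M (Suc k) \<subseteq> M k" for k
    using step5_in step5_out by (cases "x k \<in> D") (auto simp: x_def)
  have Mmono: "M k' \<subseteq> M k" if "k \<le> k'" for k k'
    using decseqD[OF decseq_SucI[of M, OF Mdec] that] .
  have xstarM: "xstar \<in> M k" for k
  proof (induction k)
    case 0 show ?case using M0 M_0 by simp
  next
    case (Suc k)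
    show ?case
    proof (cases "x k \<in> D")
      case True then show ?thesis using step5_in Suc by (simp add: x_def)
    next
      case False
      then show ?thesis using step5_out Suc xstar_D unfolding W1_def x_def by auto
    qed
  qed
  have xM: "x k \<in> M k" for k using step1 ik unfolding x_def by metis
  have M0sub: "M k \<subseteq> M0" for k using Mmono[of 0 k] M_0 by simp
  have sigma_le: "snd (u i) \<le> f xstar" for i
  proof -
    have "(xstar, f xstar) \<in> G i" using epiG[of i] epi_eq by auto
    moreover have "f xstar \<ge> gbar" using gbar M0 by auto
    ultimately show ?thesis using step1 xstarM by blast
  qed
  have ubar_epi: "ubar i \<in> epi f" for i using step2 frontier_subset_closed[OF epi_closed] by blast
  have ulim: "(\<lambda>j. ubar (ik (r j))) \<longlonglongrightarrow> (xl, sl)"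
  proof -
    have e: "(\<lambda>j. eps (r j)) \<longlonglongrightarrow> 0" using LIMSEQ_subseq_LIMSEQ[OF eps_lim r] by (simp add: o_def)
    have "(\<lambda>j. ubar (ik (r j)) - u (ik (r j))) \<longlonglongrightarrow> 0"
      by (rule Lim_null_comparison[OF _ e]) (use ik in \<open>auto simp: not_less\<close>)
    from tendsto_add[OF this lim] show ?thesis by simp
  qed
  have "(xl, sl) \<in> epi f" by (rule Lim_in_closed_set[OF epi_closed _ _ ulim]) (auto simp: ubar_epi)
  hence fxl: "f xl \<le> sl" by (simp add: epi_eq)
  have sl_le: "sl \<le> f xstar"
    using LIMSEQ_le_const2[OF tendsto_snd[OF lim]] sigma_le by auto
  have xlim: "(\<lambda>j. x (r j)) \<longlonglongrightarrow> xl" using tendsto_fst[OF lim] by (simp add: x_def)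
  have xlD: "xl \<in> D"
  proof (rule ccontr)
    assume nD: "xl \<notin> D"
    obtain \<rho> where \<rho>: "\<rho> > 0" "cball v' \<rho> \<subseteq> D"
      using v'_int by (meson open_contains_cball open_interior interior_subset subset_trans)
    obtain B where B: "\<forall>y\<in>M0. norm y \<le> B" using M0(3) unfolding bounded_iff by blast
    define R where "R = B + norm v' + 1"
    have Rb: "norm (y - v') \<le> R" if "y \<in> M0" for y
      using B that norm_triangle_ineq4[of y v'] unfolding R_def by fastforce
    have Rpos: "R > 0" using B M0(4) unfolding R_def by (smt (verit) norm_ge_zero)
    define \<delta> where "\<delta> = infdist xl D"
    have \<delta>pos: "\<delta> > 0" using in_closed_iff_infdist_zero[OF D_closed] xstar_D nD infdist_nonneg
      unfolding \<delta>_def by (metis empty_iff less_eq_real_def)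
    have \<delta>le: "\<delta> \<le> dist xl y" if "y \<in> D" for y using infdist_le[OF that] unfolding \<delta>_def .
    define \<eta> where "\<eta> = min (\<delta>/2) (\<rho>*\<delta>/(4*R))"
    have \<eta>pos: "\<eta> > 0" unfolding \<eta>_def using \<delta>pos \<rho> Rpos by auto
    obtain N where N: "\<forall>j\<ge>N. dist (x (r j)) xl < \<eta>" using xlim \<eta>pos unfolding lim_sequentially by blast
    define k where "k = r N"
    define k' where "k' = r (Suc N)"
    have kk: "Suc k \<le> k'" using r unfolding strict_mono_def k_def k'_def by (simp add: Suc_leI)
    have d1: "dist (x k) xl < \<eta>" using N k_def by auto
    have d2: "dist (x k') xl < \<eta>" using N k'_def by auto
    have xkD: "x k \<notin> D"
    proof
      assume "x k \<in> D"
      then have "\<delta> \<le> dist xl (x k)" by (rule \<delta>le)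
      then show False using d1 \<delta>pos unfolding \<eta>_def by (simp add: dist_commute)
    qed
    have sk: "xbar k \<in> closed_segment v' (x k)" "xbar k \<in> frontier D" "a k \<in> W1 (xbar k) D"
      "M (Suc k) = M k \<inter> {y. inner (a k) (y - xbar k) \<le> 0}"
      using step5_out xkD unfolding x_def by auto
    have xbarD: "xbar k \<in> D" using sk(2) frontier_subset_closed[OF D_closed] by blast
    have an: "norm (a k) = 1" and hs: "\<forall>v\<in>D. inner (a k) (v - xbar k) \<le> 0"
      using sk(3) unfolding W1_def by auto
    have far: "norm (x k - xbar k) \<ge> \<delta>/2"
    proof -
      have "\<delta> \<le> dist xl (xbar k)" by (rule \<delta>le[OF xbarD])
      also have "\<dots> \<le> dist xl (x k) + dist (x k) (xbar k)" by (rule dist_triangle)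
      finally show ?thesis using d1 unfolding \<eta>_def by (simp add: dist_commute dist_norm)
    qed
    have "v' + \<rho> *\<^sub>R a k \<in> D" using \<rho> an by (intro subsetD[OF \<rho>(2)]) (simp add: dist_norm)
    hence "inner (a k) (v' + \<rho> *\<^sub>R a k - xbar k) \<le> 0" using hs by blast
    moreover have "inner (a k) (a k) = 1" using an by (simp add: inner_commute norm_eq_sqrt_inner)
    ultimately have h1: "inner (a k) (xbar k - v') \<ge> \<rho>"
      by (simp add: inner_diff_right inner_add_right)
    obtain t where t: "0 \<le> t" "t \<le> 1" "xbar k = (1 - t) *\<^sub>R v' + t *\<^sub>R x k"
      using sk(1) unfolding closed_segment_def by auto
    define s where "s = inner (a k) (x k - v')"
    have e1: "x k - xbar k = (1 - t) *\<^sub>R (x k - v')" using t(3) by (simp add: algebra_simps)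
    have e2: "xbar k - v' = t *\<^sub>R (x k - v')" using t(3) by (simp add: algebra_simps)
    have ts: "t * s \<ge> \<rho>" using h1 e2 unfolding s_def by simp
    have sge: "s \<ge> \<rho>"
    proof -
      have "s > 0" using ts \<rho>(1) t(1) by (smt (verit) mult_nonneg_nonpos)
      then have "t * s \<le> s" using t(2) by (simp add: mult_le_cancel_right1)
      then show ?thesis using ts by simp
    qed
    have xkM0: "x k \<in> M0" using xM M0sub by blast
    have "\<delta>/2 \<le> (1 - t) * norm (x k - v')" using far e1 t(2) by simp
    also have "\<dots> \<le> (1 - t) * R" using Rb[OF xkM0] t(2) by (simp add: mult_left_mono)
    finally have omt: "\<delta>/(2*R) \<le> 1 - t" using Rpos by (simp add: field_simps)
    have "inner (a k) (x k - xbar k) = (1 - t) * s" using e1 unfolding s_def by simp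
    also have "\<dots> \<ge> \<delta>/(2*R) * \<rho>"
      using omt sge \<rho>(1) \<delta>pos Rpos t(2) by (intro mult_mono) auto
    finally have g1: "inner (a k) (x k - xbar k) \<ge> \<rho>*\<delta>/(2*R)" by (simp add: mult.commute)
    have "x k' \<in> M (Suc k)" using xM Mmono[OF kk] by blast
    then have g2: "inner (a k) (x k' - xbar k) \<le> 0" using sk(4) by blast
    have "inner (a k) (x k - x k') \<ge> \<rho>*\<delta>/(2*R)" using g1 g2 by (simp add: inner_diff_right)
    moreover have "inner (a k) (x k - x k') \<le> norm (x k - x k')"
      using Cauchy_Schwarz_ineq2[of "a k" "x k - x k'"] an by simp
    moreover have "norm (x k - x k') < 2 * \<eta>"
      using d1 d2 dist_triangle[of "x k" "x k'" xl] by (simp add: dist_commute dist_norm norm_minus_commute)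
    moreover have "2 * \<eta> \<le> \<rho>*\<delta>/(2*R)" unfolding \<eta>_def by linarith
    ultimately show False by linarith
  qed
  have "f xstar \<le> f xl" using xstar_min xlD by blast
  then show "xl \<in> {x \<in> D. f x = f xstar} \<and> sl = f xstar" using xlD fxl sl_le by auto
qed

end
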